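(* Let $S$ be a monoid whose unique maximal right ideal $\mathfrak{M}$ is two-sided, and let $A$ be a right $S$-act with a maximal subact $B$. Suppose $AI=A$ for some proper right ideal $I$ of $S$. Then for every $a\in A\setminus B$ there exists $m\in\mathfrak{M}$ with $am=a$.
   Context: $S$ is a monoid with identity $1$ having at least one right non-invertible element. A (right) $S$-act is a nonempty set with an action $(a,s)\mapsto as$, $a1=a$, $a(st)=(as)t$. A subact is a nonempty subset closed under the action; a maximal subact is a proper subact not properly contained in another proper subact. $\mathfrak{M}=\{s\in S\mid st\neq1\ \forall t\in S\}$ is the unique maximal right ideal of $S$. $AI=\{as\mid a\in A, s\in I\}$. *)

theory Defs
  imports Main
begin

definition is_act :: "'a set \<Rightarrow> ('a \<Rightarrow> 's::monoid_mult \<Rightarrow> 'a) \<Rightarrow> bool" where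
  "is_act A act \<longleftrightarrow> A \<noteq> {} \<and> (\<forall>a\<in>A. \<forall>s. act a s \<in> A)
     \<and> (\<forall>a\<in>A. act a 1 = a) \<and> (\<forall>a\<in>A. \<forall>s t. act a (s * t) = act (act a s) t)"

definition subact :: "'a set \<Rightarrow> ('a \<Rightarrow> 's::monoid_mult \<Rightarrow> 'a) \<Rightarrow> 'a set \<Rightarrow> bool" where
  "subact A act B \<longleftrightarrow> B \<noteq> {} \<and> B \<subseteq> A \<and> (\<forall>b\<in>B. \<forall>s. act b s \<in> B)"

definition maximal_subact :: "'a set \<Rightarrow> ('a \<Rightarrow> 's::monoid_mult \<Rightarrow> 'a) \<Rightarrow> 'a set \<Rightarrow> bool" where
  "maximal_subact A act B \<longleftrightarrow> subact A act B \<and> B \<noteq> A \<and>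
     (\<forall>C. subact A act C \<and> C \<noteq> A \<and> B \<subseteq> C \<longrightarrow> C = B)"

definition right_ideal :: "'s::monoid_mult set \<Rightarrow> bool" where
  "right_ideal I \<longleftrightarrow> I \<noteq> {} \<and> (\<forall>x\<in>I. \<forall>s. x * s \<in> I)"

definition two_sided_ideal :: "'s::monoid_mult set \<Rightarrow> bool" where
  "two_sided_ideal I \<longleftrightarrow> right_ideal I \<and> (\<forall>x\<in>I. \<forall>s. s * x \<in> I)"

definition MM :: "'s::monoid_mult set" where
  "MM = {s. \<forall>t. s * t \<noteq> 1}"

definition act_set :: "('a \<Rightarrow> 's \<Rightarrow> 'a) \<Rightarrow> 'a set \<Rightarrow> 's set \<Rightarrow> 'a set" where
  "act_set act A I = {act a s | a s. a \<in> A \<and> s \<in> I}"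

end

theory Submission
  imports Defs
begin

theorem corollary2p8:
  fixes A B :: "'a set" and act :: "'a \<Rightarrow> 's::monoid_mult \<Rightarrow> 'a" and I :: "'s set"
  assumes nonunit: "\<exists>s::'s. \<forall>t. s * t \<noteq> 1"
    and M_two_sided: "two_sided_ideal (MM :: 's set)"
    and act: "is_act A act"
    and maxB: "maximal_subact A act B"
    and I: "right_ideal I" "I \<noteq> UNIV"
    and AI: "act_set act A I = A"
  shows "\<forall>a\<in>A - B. \<exists>m\<in>MM. act a m = a"
proof
  fix a assume a: "a \<in> A - B"
  have IM: "I \<subseteq> MM"
  proof
    fix x assume x: "x \<in> I"
    show "x \<in> MM"
    proof (rule ccontr)
      assume "x \<notin> MM"
      then obtain t where "x * t = 1" unfolding MM_def by auto
      hence "1 \<in> I" using I(1) x unfolding right_ideal_def by (metis (no_types))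
      hence "\<And>y. y \<in> I" using I(1) unfolding right_ideal_def by (metis (no_types) mult_1)
      hence "I = UNIV" by blast
      thus False using I(2) by simp
    qed
  qed
  have Bsub: "subact A act B" "B \<noteq> A" and Bmax: "\<And>C. subact A act C \<Longrightarrow> C \<noteq> A \<Longrightarrow> B \<subseteq> C \<Longrightarrow> C = B"
    using maxB unfolding maximal_subact_def by auto
  define C where "C = B \<union> {act a s | s. True}"
  have "subact A act C"
    unfolding subact_def
  proof (intro conjI ballI allI)
    show "C \<noteq> {}" unfolding C_def by blast
    show "C \<subseteq> A" using Bsub(1) act a unfolding subact_def is_act_def C_def by auto
  next
    fix b s assume "b \<in> C"
    then consider "b \<in> B" | u where "b = act a u" unfolding C_def by blast
    then show "act b s \<in> C"
    proof cases
      case 1 then show ?thesis using Bsub(1) unfolding subact_def C_def by auto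
    next
      case 2
      have "act b s = act a (u * s)" using act a 2 unfolding is_act_def by auto
      then show ?thesis unfolding C_def by blast
    qed
  qed
  moreover have "C \<noteq> B"
  proof
    assume "C = B"
    moreover have "act a 1 \<in> C" unfolding C_def by blast
    ultimately show False using a act unfolding is_act_def by auto
  qed
  moreover have "B \<subseteq> C" unfolding C_def by blast
  ultimately have CA: "C = A" using Bmax by blast
  have "a \<in> act_set act A I" using AI a by simp
  then obtain a' s where as: "a = act a' s" "a' \<in> A" "s \<in> I" unfolding act_set_def by auto
  have "a' \<in> C" using CA as by simp
  moreover have "a' \<notin> B"
  proof
    assume "a' \<in> B" hence "act a' s \<in> B" using Bsub(1) unfolding subact_def by auto
    thus False using as a by simp
  qed
  ultimately obtain t where t: "a' = act a t" unfolding C_def by auto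
  have "act a (t * s) = act (act a t) s" using act a unfolding is_act_def by blast
  also have "\<dots> = a" using as(1) t by simp
  finally have "act a (t * s) = a" .
  moreover have "t * s \<in> MM" using M_two_sided IM as(3) unfolding two_sided_ideal_def by auto
  ultimately show "\<exists>m\<in>MM. act a m = a" by blast
qed

end
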